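(* Let $G$ be a subgroup of the symmetric group $\mathcal{S}_{N}$ and $\chi$ an irreducible character of $G$, and define for $N\times N$ real matrices $A=(a_{ij})$ the immanant $d_{\chi}^{G}(A)=\sum_{\sigma\in G}\chi(\sigma)\prod_{i=1}^{N}a_{i\,\sigma(i)}$. If $A,B,C,X$ are $N\times N$ real symmetric positive semidefinite matrices, then \[ d_{\chi}^{G}(A+X)+d_{\chi}^{G}(B+X)+d_{\chi}^{G}(C+X)+d_{\chi}^{G}(A+B+C+X)\geq d_{\chi}^{G}(A+B+X)+d_{\chi}^{G}(B+C+X)+d_{\chi}^{G}(C+A+X)+d_{\chi}^{G}(X). \] *)

theory Defs
  imports "HOL-Algebra.Sym_Groups" "Jordan_Normal_Form.Matrix" "HOL-Library.Complex_Order"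
begin

text \<open>Real N x N matrices are functions nat => nat => real, indexed by 1..N
  (matching sym_group N, which permutes 1..N).\<close>

definition real_sym_psd :: "nat \<Rightarrow> (nat \<Rightarrow> nat \<Rightarrow> real) \<Rightarrow> bool" where
  "real_sym_psd N A \<longleftrightarrow>
     (\<forall>i\<in>{1..N}. \<forall>j\<in>{1..N}. A i j = A j i) \<and>
     (\<forall>x :: nat \<Rightarrow> real. (\<Sum>i=1..N. \<Sum>j=1..N. x i * A i j * x j) \<ge> 0)"

definition is_representation :: "(nat \<Rightarrow> nat) set \<Rightarrow> nat \<Rightarrow> ((nat \<Rightarrow> nat) \<Rightarrow> complex mat) \<Rightarrow> bool" where
  "is_representation G d \<rho> \<longleftrightarrow>
     (\<forall>\<sigma>\<in>G. \<rho> \<sigma> \<in> carrier_mat d d) \<and>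
     \<rho> id = 1\<^sub>m d \<and>
     (\<forall>\<sigma>\<in>G. \<forall>\<tau>\<in>G. \<rho> (\<sigma> \<circ> \<tau>) = \<rho> \<sigma> * \<rho> \<tau>)"

definition invariant_subspace :: "(nat \<Rightarrow> nat) set \<Rightarrow> nat \<Rightarrow> ((nat \<Rightarrow> nat) \<Rightarrow> complex mat) \<Rightarrow> complex vec set \<Rightarrow> bool" where
  "invariant_subspace G d \<rho> W \<longleftrightarrow>
     W \<subseteq> carrier_vec d \<and> 0\<^sub>v d \<in> W \<and>
     (\<forall>v\<in>W. \<forall>w\<in>W. v + w \<in> W) \<and>
     (\<forall>c::complex. \<forall>v\<in>W. c \<cdot>\<^sub>v v \<in> W) \<and>
     (\<forall>\<sigma>\<in>G. \<forall>v\<in>W. \<rho> \<sigma> *\<^sub>v v \<in> W)"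

definition irreducible_representation :: "(nat \<Rightarrow> nat) set \<Rightarrow> nat \<Rightarrow> ((nat \<Rightarrow> nat) \<Rightarrow> complex mat) \<Rightarrow> bool" where
  "irreducible_representation G d \<rho> \<longleftrightarrow>
     is_representation G d \<rho> \<and> d > 0 \<and>
     (\<forall>W. invariant_subspace G d \<rho> W \<longrightarrow> W = {0\<^sub>v d} \<or> W = carrier_vec d)"

definition mat_trace :: "complex mat \<Rightarrow> complex" where
  "mat_trace M = (\<Sum>i<dim_row M. M $$ (i, i))"

definition irreducible_character :: "(nat \<Rightarrow> nat) set \<Rightarrow> ((nat \<Rightarrow> nat) \<Rightarrow> complex) \<Rightarrow> bool" where
  "irreducible_character G \<chi> \<longleftrightarrow>
     (\<exists>d \<rho>. irreducible_representation G d \<rho> \<and> (\<forall>\<sigma>\<in>G. \<chi> \<sigma> = mat_trace (\<rho> \<sigma>)))"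

definition immanant :: "(nat \<Rightarrow> nat) set \<Rightarrow> ((nat \<Rightarrow> nat) \<Rightarrow> complex) \<Rightarrow> nat \<Rightarrow> (nat \<Rightarrow> nat \<Rightarrow> real) \<Rightarrow> complex" where
  "immanant G \<chi> N A = (\<Sum>\<sigma>\<in>G. \<chi> \<sigma> * (\<Prod>i=1..N. complex_of_real (A i (\<sigma> i))))"

end

theory Submission
  imports Defs "Jordan_Normal_Form.Determinant"
begin


lemma quad_insert:
  fixes M :: "'a \<Rightarrow> 'a \<Rightarrow> real"
  assumes fin: "finite F" and p: "p \<notin> F"
    and sym: "\<forall>i\<in>insert p F. \<forall>j\<in>insert p F. M i j = M j i"
  shows "(\<Sum>i\<in>insert p F. \<Sum>j\<in>insert p F. (x(p:=t)) i * M i j * (x(p:=t)) j)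
     = t*t*M p p + 2*t*(\<Sum>j\<in>F. M p j * x j) + (\<Sum>i\<in>F. \<Sum>j\<in>F. x i * M i j * x j)"
proof -
  let ?y = "x(p:=t)"
  have fp: "(\<Sum>j\<in>insert p F. ?y p * M p j * ?y j) = t*M p p*t + t * (\<Sum>j\<in>F. M p j * x j)"
  proof -
    have "(\<Sum>j\<in>insert p F. ?y p * M p j * ?y j) = ?y p * M p p * ?y p + (\<Sum>j\<in>F. ?y p * M p j * ?y j)"
      by (rule sum.insert[OF fin p])
    also have "(\<Sum>j\<in>F. ?y p * M p j * ?y j) = (\<Sum>j\<in>F. t * (M p j * x j))"
      using p by (intro sum.cong) auto
    finally show ?thesis by (simp add: sum_distrib_left)
  qed
  have fi: "(\<Sum>j\<in>insert p F. ?y i * M i j * ?y j) = t * (M p i * x i) + (\<Sum>j\<in>F. x i * M i j * x j)"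
    if i: "i \<in> F" for i
  proof -
    have "(\<Sum>j\<in>insert p F. ?y i * M i j * ?y j) = ?y i * M i p * ?y p + (\<Sum>j\<in>F. ?y i * M i j * ?y j)"
      by (rule sum.insert[OF fin p])
    also have "(\<Sum>j\<in>F. ?y i * M i j * ?y j) = (\<Sum>j\<in>F. x i * M i j * x j)"
      using p i by (intro sum.cong) auto
    also have "?y i * M i p * ?y p = t * (M p i * x i)"
    proof -
      have "M i p = M p i" using sym i by blast
      then show ?thesis using p i by (auto simp: algebra_simps)
    qed
    finally show ?thesis by simp
  qed
  have "(\<Sum>i\<in>insert p F. \<Sum>j\<in>insert p F. ?y i * M i j * ?y j)
      = (\<Sum>j\<in>insert p F. ?y p * M p j * ?y j) + (\<Sum>i\<in>F. \<Sum>j\<in>insert p F. ?y i * M i j * ?y j)"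
    by (rule sum.insert[OF fin p])
  also have "(\<Sum>i\<in>F. \<Sum>j\<in>insert p F. ?y i * M i j * ?y j)
      = (\<Sum>i\<in>F. t * (M p i * x i) + (\<Sum>j\<in>F. x i * M i j * x j))"
    using fi by (rule sum.cong[OF refl])
  also have "\<dots> = t * (\<Sum>i\<in>F. M p i * x i) + (\<Sum>i\<in>F. \<Sum>j\<in>F. x i * M i j * x j)"
    by (simp only: sum.distrib sum_distrib_left)
  finally show ?thesis unfolding fp by (simp add: algebra_simps)
qed

lemma psd_factor:
  fixes S :: "'a set"
  assumes "finite S"
  shows "\<forall>M :: 'a \<Rightarrow> 'a \<Rightarrow> real. (\<forall>i\<in>S. \<forall>j\<in>S. M i j = M j i) \<longrightarrow>
     (\<forall>x. 0 \<le> (\<Sum>i\<in>S. \<Sum>j\<in>S. x i * M i j * x j)) \<longrightarrow>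
     (\<exists>us. \<forall>i\<in>S. \<forall>j\<in>S. M i j = (\<Sum>u\<leftarrow>us. u i * u j))"
  using assms
proof (induction S rule: finite_induct)
  case empty
  then show ?case by auto
next
  case (insert p F)
  show ?case
  proof (intro allI impI)
    fix M :: "'a \<Rightarrow> 'a \<Rightarrow> real"
    assume sym: "\<forall>i\<in>insert p F. \<forall>j\<in>insert p F. M i j = M j i"
      and psd: "\<forall>x. 0 \<le> (\<Sum>i\<in>insert p F. \<Sum>j\<in>insert p F. x i * M i j * x j)"
    define m where "m = M p p"
    define s where "s x = (\<Sum>j\<in>F. M p j * x j)" for x
    define QF where "QF x = (\<Sum>i\<in>F. \<Sum>j\<in>F. x i * M i j * x j)" for x
    have key: "0 \<le> t*t*m + 2*t*s x + QF x" for x t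
      using psd[rule_format, of "x(p:=t)"] quad_insert[OF insert(1,2) sym, of x t]
      unfolding m_def s_def QF_def by simp
    have m0: "0 \<le> m" using key[of 1 "\<lambda>_. 0"] by (simp add: s_def QF_def)
    define v where "v j = (if 0 < m then M p j / sqrt m else 0)" for j
    define M' where "M' i j = M i j - v i * v j" for i j
    have QF': "(\<Sum>i\<in>F. \<Sum>j\<in>F. x i * M' i j * x j) = QF x - (\<Sum>j\<in>F. v j * x j)^2" for x
      by (simp add: M'_def QF_def power2_eq_square algebra_simps sum_subtractf sum_distrib_left sum_distrib_right)
    have M'psd: "\<forall>x. 0 \<le> (\<Sum>i\<in>F. \<Sum>j\<in>F. x i * M' i j * x j)"
    proof
      fix x
      show "0 \<le> (\<Sum>i\<in>F. \<Sum>j\<in>F. x i * M' i j * x j)"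
      proof (cases "0 < m")
        case True
        have "(\<Sum>j\<in>F. v j * x j) = s x / sqrt m"
          using True by (simp add: v_def s_def sum_divide_distrib)
        then have "(\<Sum>j\<in>F. v j * x j)^2 = (s x)^2 / m"
          using True m0 by (simp add: power_divide)
        moreover have "0 \<le> QF x - (s x)^2 / m"
        proof -
          have "0 \<le> (- s x / m)*(- s x / m)*m + 2*(- s x / m)*s x + QF x" by (rule key)
          also have "\<dots> = QF x - (s x)^2 / m" using True
            by (simp add: field_simps power2_eq_square)
          finally show ?thesis .
        qed
        ultimately show ?thesis by (simp add: QF')
      next
        case False
        then show ?thesis using key[of 0 x] by (simp add: QF' v_def)
      qed
    qed
    have M'sym: "\<forall>i\<in>F. \<forall>j\<in>F. M' i j = M' j i"
    proof (intro ballI)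
      fix i j assume "i \<in> F" "j \<in> F"
      then have "M i j = M j i" using sym by blast
      then show "M' i j = M' j i" by (simp add: M'_def mult.commute)
    qed
    obtain us where us: "\<forall>i\<in>F. \<forall>j\<in>F. M' i j = (\<Sum>u\<leftarrow>us. u i * u j)"
      using insert(3) M'sym M'psd by blast
    have row: "M p j = v p * v j" if j: "j \<in> insert p F" for j
    proof (cases "0 < m")
      case True
      then have "v p = sqrt m" by (simp add: v_def m_def[symmetric] real_div_sqrt)
      then show ?thesis using True by (simp add: v_def)
    next
      case False
      with m0 have m00: "m = 0" by simp
      have "s x = 0" for x
      proof (rule ccontr)
        assume "s x \<noteq> 0"
        then have "0 \<le> 2 * (-(QF x + 1) / (2 * s x)) * s x + QF x"
          using key[of "-(QF x + 1) / (2 * s x)" x] m00 by simp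
        also have "\<dots> = -1" using \<open>s x \<noteq> 0\<close> by (simp add: field_simps)
        finally show False by simp
      qed
      then have "(\<Sum>k\<in>F. M p k * M p k) = 0" unfolding s_def by blast
      then have "\<forall>k\<in>F. M p k * M p k = 0"
        using insert(1) by (subst (asm) sum_nonneg_eq_0_iff) auto
      then show ?thesis using j m00 False by (auto simp: v_def m_def)
    qed
    let ?us = "v # map (\<lambda>u. u(p:=0)) us"
    have "\<forall>i\<in>insert p F. \<forall>j\<in>insert p F. M i j = (\<Sum>u\<leftarrow>?us. u i * u j)"
    proof (intro ballI)
      fix i j assume i: "i \<in> insert p F" and j: "j \<in> insert p F"
      have z: "(\<Sum>u\<leftarrow>map (\<lambda>u. u(p:=0)) us. u i * u j) = 0" if "i = p \<or> j = p"
      proof -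
        have "(\<Sum>u\<leftarrow>map (\<lambda>u. u(p:=0)) us. u i * u j) = (\<Sum>u\<leftarrow>us. (u(p:=0)) i * (u(p:=0)) j)"
          by (simp only: map_map o_def)
        also have "\<dots> = (\<Sum>u\<leftarrow>us. 0)"
          using that by (intro arg_cong[where f=sum_list] map_cong) auto
        finally show ?thesis by simp
      qed
      show "M i j = (\<Sum>u\<leftarrow>?us. u i * u j)"
      proof (cases "i = p \<or> j = p")
        case True
        show ?thesis
        proof (cases "i = p")
          case True
          then show ?thesis using z row j by simp
        next
          case False
          then have jp: "j = p" using \<open>i = p \<or> j = p\<close> by simp
          have "M i j = M j i" using sym i j by blast
          then show ?thesis using z row i jp by (simp add: mult.commute)
        qed
      next
        case False
        then have "i \<in> F" "j \<in> F" using i j by auto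
        moreover have "(\<Sum>u\<leftarrow>map (\<lambda>u. u(p:=0)) us. u i * u j) = (\<Sum>u\<leftarrow>us. u i * u j)"
        proof -
          have "(\<Sum>u\<leftarrow>map (\<lambda>u. u(p:=0)) us. u i * u j) = (\<Sum>u\<leftarrow>us. (u(p:=0)) i * (u(p:=0)) j)"
            by (simp only: map_map o_def)
          also have "\<dots> = (\<Sum>u\<leftarrow>us. u i * u j)"
            using False by (intro arg_cong[where f=sum_list] map_cong) auto
          finally show ?thesis .
        qed
        moreover have "(\<Sum>u\<leftarrow>?us. u i * u j) = v i * v j + (\<Sum>u\<leftarrow>map (\<lambda>u. u(p:=0)) us. u i * u j)"
          by (simp only: list.map sum_list.Cons)
        ultimately show ?thesis using us[rule_format, of i j] by (simp add: M'_def)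
      qed
    qed
    then show "\<exists>us. \<forall>i\<in>insert p F. \<forall>j\<in>insert p F. M i j = (\<Sum>u\<leftarrow>us. u i * u j)" by blast
  qed
qed



definition gram :: "'a set \<Rightarrow> ('a \<Rightarrow> 'a \<Rightarrow> complex) \<Rightarrow> bool" where
  "gram S K \<longleftrightarrow> (\<exists>us. \<forall>s\<in>S. \<forall>t\<in>S. K s t = (\<Sum>u\<leftarrow>us. cnj (u s) * u t))"

lemma gram_zero: "gram S (\<lambda>_ _. 0)"
  unfolding gram_def by (rule exI[of _ "[]"]) simp

lemma gram_one: "gram S (\<lambda>_ _. 1)"
  unfolding gram_def by (rule exI[of _ "[\<lambda>_. 1]"]) simp

lemma gram_cong: "gram S K \<Longrightarrow> (\<And>s t. s \<in> S \<Longrightarrow> t \<in> S \<Longrightarrow> K s t = K' s t) \<Longrightarrow> gram S K'"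
  unfolding gram_def by metis

lemma gram_add:
  assumes "gram S K1" "gram S K2"
  shows "gram S (\<lambda>s t. K1 s t + K2 s t)"
proof -
  obtain us1 where 1: "\<forall>s\<in>S. \<forall>t\<in>S. K1 s t = (\<Sum>u\<leftarrow>us1. cnj (u s) * u t)"
    using assms(1) unfolding gram_def by blast
  obtain us2 where 2: "\<forall>s\<in>S. \<forall>t\<in>S. K2 s t = (\<Sum>u\<leftarrow>us2. cnj (u s) * u t)"
    using assms(2) unfolding gram_def by blast
  show ?thesis unfolding gram_def
    by (rule exI[of _ "us1 @ us2"]) (simp add: 1 2)
qed

lemma sum_list_concat_map:
  "(\<Sum>w\<leftarrow>concat (map (\<lambda>u. map (h u) vs) us). F w) = (\<Sum>u\<leftarrow>us. \<Sum>v\<leftarrow>vs. F (h u v))"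
  by (induction us) (simp_all add: o_def)

lemma sum_list_times:
  fixes f g :: "'x \<Rightarrow> 'b::comm_semiring_0"
  shows "(\<Sum>u\<leftarrow>us. f u) * (\<Sum>v\<leftarrow>vs. g v) = (\<Sum>u\<leftarrow>us. \<Sum>v\<leftarrow>vs. f u * g v)"
  by (induction us) (simp_all add: distrib_right sum_list_const_mult)

lemma gram_mult:
  assumes "gram S K1" "gram S K2"
  shows "gram S (\<lambda>s t. K1 s t * K2 s t)"
proof -
  obtain us1 where 1: "\<forall>s\<in>S. \<forall>t\<in>S. K1 s t = (\<Sum>u\<leftarrow>us1. cnj (u s) * u t)"
    using assms(1) unfolding gram_def by blast
  obtain us2 where 2: "\<forall>s\<in>S. \<forall>t\<in>S. K2 s t = (\<Sum>u\<leftarrow>us2. cnj (u s) * u t)"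
    using assms(2) unfolding gram_def by blast
  let ?us = "concat (map (\<lambda>u. map (\<lambda>v x. u x * v x) us2) us1)"
  have "\<forall>s\<in>S. \<forall>t\<in>S. K1 s t * K2 s t = (\<Sum>u\<leftarrow>?us. cnj (u s) * u t)"
  proof (intro ballI)
    fix s t assume "s \<in> S" "t \<in> S"
    then have "K1 s t * K2 s t = (\<Sum>u\<leftarrow>us1. cnj (u s) * u t) * (\<Sum>v\<leftarrow>us2. cnj (v s) * v t)"
      using 1 2 by simp
    also have "\<dots> = (\<Sum>u\<leftarrow>us1. \<Sum>v\<leftarrow>us2. (cnj (u s) * u t) * (cnj (v s) * v t))"
      by (rule sum_list_times)
    also have "\<dots> = (\<Sum>u\<leftarrow>?us. cnj (u s) * u t)"
      by (simp only: sum_list_concat_map) (simp add: algebra_simps)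
    finally show "K1 s t * K2 s t = (\<Sum>u\<leftarrow>?us. cnj (u s) * u t)" .
  qed
  then show ?thesis unfolding gram_def by blast
qed

lemma gram_sum:
  assumes "finite I" "\<forall>i\<in>I. gram S (K i)"
  shows "gram S (\<lambda>s t. \<Sum>i\<in>I. K i s t)"
  using assms
proof (induction I rule: finite_induct)
  case empty then show ?case by (simp add: gram_zero)
next
  case (insert i I)
  have "gram S (\<lambda>s t. K i s t + (\<Sum>i\<in>I. K i s t))"
    using insert by (intro gram_add) auto
  then show ?case using insert by simp
qed

lemma gram_prod:
  assumes "finite I" "\<forall>i\<in>I. gram S (K i)"
  shows "gram S (\<lambda>s t. \<Prod>i\<in>I. K i s t)"
  using assms
proof (induction I rule: finite_induct)
  case empty then show ?case by (simp add: gram_one)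
next
  case (insert i I)
  have "gram S (\<lambda>s t. K i s t * (\<Prod>i\<in>I. K i s t))"
    using insert by (intro gram_mult) auto
  then show ?case using insert by simp
qed

lemma gram_nested:
  assumes fin: "finite I" and gA: "\<forall>i\<in>I. gram S (A i)" and gB: "\<forall>i\<in>I. gram S (B i)"
    and gC: "\<forall>i\<in>I. gram S (C i)" and gX: "\<forall>i\<in>I. gram S (X i)"
  shows "gram S (\<lambda>s t. \<Sum>T\<in>Pow I - {{}}. (\<Prod>i\<in>T. C i s t) *
     (\<Sum>U\<in>Pow (I - T) - {{}}. (\<Prod>i\<in>U. B i s t) *
     (\<Sum>V\<in>Pow (I - T - U) - {{}}. (\<Prod>i\<in>V. A i s t) * (\<Prod>i\<in>I - T - U - V. X i s t))))"
proof -
  have fs: "finite J" if "J \<subseteq> I" for J using fin that finite_subset by blast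
  have fs2: "finite J" if "J \<subseteq> I - K" for J K using fin that finite_subset by blast
  have fs3: "finite J" if "J \<subseteq> I - K - L" for J K L using fin that finite_subset by blast
  show ?thesis
    apply (rule gram_sum) using fin apply simp
    apply (intro ballI gram_mult gram_prod gram_sum)
    using fs fs2 fs3 gA gB gC gX by auto
qed

lemma prod_add_nonempty:
  fixes b y :: "'i \<Rightarrow> 'b::comm_ring_1"
  assumes "finite J"
  shows "(\<Sum>U\<in>Pow J - {{}}. (\<Prod>i\<in>U. b i) * (\<Prod>i\<in>J - U. y i)) = (\<Prod>i\<in>J. b i + y i) - (\<Prod>i\<in>J. y i)"
proof -
  have "(\<Prod>i\<in>J. b i + y i) = (\<Sum>U\<in>Pow J. (\<Prod>i\<in>U. b i) * (\<Prod>i\<in>J - U. y i))"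
    by (rule prod_add[OF assms])
  also have "\<dots> = (\<Prod>i\<in>J. y i) + (\<Sum>U\<in>Pow J - {{}}. (\<Prod>i\<in>U. b i) * (\<Prod>i\<in>J - U. y i))"
    using assms by (subst sum.remove[of _ "{}"]) auto
  finally show ?thesis by simp
qed

lemma step_diff:
  fixes b y z :: "'i \<Rightarrow> 'b::comm_ring_1"
  assumes "finite J"
  shows "(\<Sum>U\<in>Pow J - {{}}. (\<Prod>i\<in>U. b i) * ((\<Prod>i\<in>J - U. y i) - (\<Prod>i\<in>J - U. z i)))
     = ((\<Prod>i\<in>J. b i + y i) - (\<Prod>i\<in>J. y i)) - ((\<Prod>i\<in>J. b i + z i) - (\<Prod>i\<in>J. z i))"
  by (simp add: right_diff_distrib sum_subtractf prod_add_nonempty[OF assms])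

lemma scalar3:
  fixes a b c x :: "'i \<Rightarrow> 'b::comm_ring_1"
  assumes fin: "finite I"
  shows "(\<Sum>T\<in>Pow I - {{}}. (\<Prod>i\<in>T. c i) *
     (\<Sum>U\<in>Pow (I - T) - {{}}. (\<Prod>i\<in>U. b i) *
     (\<Sum>V\<in>Pow (I - T - U) - {{}}. (\<Prod>i\<in>V. a i) * (\<Prod>i\<in>I - T - U - V. x i))))
   = (\<Prod>i\<in>I. a i + x i) + (\<Prod>i\<in>I. b i + x i) + (\<Prod>i\<in>I. c i + x i) + (\<Prod>i\<in>I. a i + b i + c i + x i)
     - (\<Prod>i\<in>I. a i + b i + x i) - (\<Prod>i\<in>I. b i + c i + x i) - (\<Prod>i\<in>I. c i + a i + x i) - (\<Prod>i\<in>I. x i)"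
proof -
  define E2 where "E2 J = (\<Prod>i\<in>J. b i + (a i + x i)) - (\<Prod>i\<in>J. a i + x i) - ((\<Prod>i\<in>J. b i + x i) - (\<Prod>i\<in>J. x i))" for J
  have in2: "(\<Sum>U\<in>Pow J - {{}}. (\<Prod>i\<in>U. b i) *
     (\<Sum>V\<in>Pow (J - U) - {{}}. (\<Prod>i\<in>V. a i) * (\<Prod>i\<in>J - U - V. x i))) = E2 J" if J: "finite J" for J
  proof -
    have "(\<Sum>U\<in>Pow J - {{}}. (\<Prod>i\<in>U. b i) *
     (\<Sum>V\<in>Pow (J - U) - {{}}. (\<Prod>i\<in>V. a i) * (\<Prod>i\<in>J - U - V. x i)))
      = (\<Sum>U\<in>Pow J - {{}}. (\<Prod>i\<in>U. b i) * ((\<Prod>i\<in>J - U. a i + x i) - (\<Prod>i\<in>J - U. x i)))"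
      using J by (intro sum.cong refl) (simp add: prod_add_nonempty)
    also have "\<dots> = E2 J" unfolding E2_def by (rule step_diff[OF J])
    finally show ?thesis .
  qed
  have "(\<Sum>T\<in>Pow I - {{}}. (\<Prod>i\<in>T. c i) *
     (\<Sum>U\<in>Pow (I - T) - {{}}. (\<Prod>i\<in>U. b i) *
     (\<Sum>V\<in>Pow (I - T - U) - {{}}. (\<Prod>i\<in>V. a i) * (\<Prod>i\<in>I - T - U - V. x i))))
     = (\<Sum>T\<in>Pow I - {{}}. (\<Prod>i\<in>T. c i) * E2 (I - T))"
    using fin by (intro sum.cong refl) (simp add: in2)
  also have "\<dots> = (\<Sum>T\<in>Pow I - {{}}. (\<Prod>i\<in>T. c i) * ((\<Prod>i\<in>I - T. b i + (a i + x i)) - (\<Prod>i\<in>I - T. a i + x i)))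
      - (\<Sum>T\<in>Pow I - {{}}. (\<Prod>i\<in>T. c i) * ((\<Prod>i\<in>I - T. b i + x i) - (\<Prod>i\<in>I - T. x i)))"
    unfolding E2_def by (simp add: right_diff_distrib sum_subtractf)
  also have "\<dots> = (\<Prod>i\<in>I. a i + x i) + (\<Prod>i\<in>I. b i + x i) + (\<Prod>i\<in>I. c i + x i) + (\<Prod>i\<in>I. a i + b i + c i + x i)
     - (\<Prod>i\<in>I. a i + b i + x i) - (\<Prod>i\<in>I. b i + c i + x i) - (\<Prod>i\<in>I. c i + a i + x i) - (\<Prod>i\<in>I. x i)"
  proof -
    have e1: "(\<Prod>i\<in>I. c i + (b i + (a i + x i))) = (\<Prod>i\<in>I. a i + b i + c i + x i)"
      by (intro prod.cong refl) (simp add: add_ac)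
    have e2: "(\<Prod>i\<in>I. c i + (a i + x i)) = (\<Prod>i\<in>I. c i + a i + x i)"
      by (intro prod.cong refl) (simp add: add_ac)
    have e3: "(\<Prod>i\<in>I. c i + (b i + x i)) = (\<Prod>i\<in>I. b i + c i + x i)"
      by (intro prod.cong refl) (simp add: add_ac)
    have e4: "(\<Prod>i\<in>I. b i + (a i + x i)) = (\<Prod>i\<in>I. a i + b i + x i)"
      by (intro prod.cong refl) (simp add: add_ac)
    show ?thesis
      unfolding step_diff[OF fin] e1 e2 e3 e4 by (simp add: algebra_simps)
  qed
  finally show ?thesis .
qed



definition mm :: "nat \<Rightarrow> (nat \<Rightarrow> nat \<Rightarrow> complex) \<Rightarrow> (nat \<Rightarrow> nat \<Rightarrow> complex) \<Rightarrow> (nat \<Rightarrow> nat \<Rightarrow> complex)" where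
  "mm d X Y = (\<lambda>i j. \<Sum>k<d. X i k * Y k j)"
definition adj :: "(nat \<Rightarrow> nat \<Rightarrow> complex) \<Rightarrow> (nat \<Rightarrow> nat \<Rightarrow> complex)" where
  "adj X = (\<lambda>i j. cnj (X j i))"
definition idm :: "nat \<Rightarrow> (nat \<Rightarrow> nat \<Rightarrow> complex)" where
  "idm d = (\<lambda>i j. if i = j \<and> i < d then 1 else 0)"
definition clean :: "nat \<Rightarrow> (nat \<Rightarrow> nat \<Rightarrow> complex) \<Rightarrow> bool" where
  "clean d X \<longleftrightarrow> (\<forall>i j. \<not> (i < d \<and> j < d) \<longrightarrow> X i j = 0)"
definition tr :: "nat \<Rightarrow> (nat \<Rightarrow> nat \<Rightarrow> complex) \<Rightarrow> complex" where
  "tr d X = (\<Sum>i<d. X i i)"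

lemma mm_assoc: "mm d (mm d X Y) Z = mm d X (mm d Y Z)"
proof -
  have "(\<Sum>k<d. (\<Sum>l<d. X i l * Y l k) * Z k j) = (\<Sum>l<d. X i l * (\<Sum>k<d. Y l k * Z k j))" for i j
    by (simp add: sum_distrib_left sum_distrib_right mult.assoc) (rule sum.swap)
  then show ?thesis unfolding mm_def by auto
qed

lemma adj_adj[simp]: "adj (adj X) = X"
  unfolding adj_def by simp

lemma adj_mm: "adj (mm d X Y) = mm d (adj Y) (adj X)"
  unfolding adj_def mm_def by (auto simp: cnj_sum mult.commute)

lemma clean_mm: "clean d X \<Longrightarrow> clean d Y \<Longrightarrow> clean d (mm d X Y)"
  unfolding clean_def mm_def by auto

lemma clean_adj: "clean d X \<Longrightarrow> clean d (adj X)"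
  unfolding clean_def adj_def by auto

lemma clean_idm: "clean d (idm d)"
  unfolding clean_def idm_def by auto

lemma adj_idm: "adj (idm d) = idm d"
  unfolding adj_def idm_def by (intro ext) auto

lemma mm_idm_left: assumes "clean d X" shows "mm d (idm d) X = X"
proof (intro ext)
  fix i j
  have "mm d (idm d) X i j = (\<Sum>k<d. if k = i then (if i < d then X k j else 0) else 0)"
    unfolding mm_def idm_def by (intro sum.cong) auto
  also have "\<dots> = X i j" using assms unfolding clean_def by (simp add: sum.delta)
  finally show "mm d (idm d) X i j = X i j" .
qed

lemma mm_idm_right: assumes "clean d X" shows "mm d X (idm d) = X"
proof (intro ext)
  fix i j
  have "mm d X (idm d) i j = (\<Sum>k<d. if k = j then (if j < d then X i k else 0) else 0)"
    unfolding mm_def idm_def by (intro sum.cong) auto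
  also have "\<dots> = X i j" using assms unfolding clean_def by (simp add: sum.delta)
  finally show "mm d X (idm d) i j = X i j" .
qed

lemma tr_comm: "tr d (mm d X Y) = tr d (mm d Y X)"
  unfolding tr_def mm_def by (subst sum.swap) (simp add: mult.commute)

lemma mm_sum_right: "mm d X (\<lambda>i j. \<Sum>g\<in>G. F g i j) = (\<lambda>i j. \<Sum>g\<in>G. mm d X (F g) i j)"
  unfolding mm_def by (auto simp: sum_distrib_left intro!: ext sum.swap)

lemma mm_sum_left: "mm d (\<lambda>i j. \<Sum>g\<in>G. F g i j) X = (\<lambda>i j. \<Sum>g\<in>G. mm d (F g) X i j)"
  unfolding mm_def by (auto simp: sum_distrib_right intro!: ext sum.swap)

lemma tr_sum: "tr d (\<lambda>i j. \<Sum>g\<in>G. F g i j) = (\<Sum>g\<in>G. tr d (F g))"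
  unfolding tr_def by (rule sum.swap)

lemma cnj_mult_self_nonneg: "0 \<le> cnj z * z"
  by (simp add: less_eq_complex_def)



locale repctx =
  fixes G :: "(nat \<Rightarrow> nat) set" and N d :: nat and \<rho> :: "(nat \<Rightarrow> nat) \<Rightarrow> complex mat"
  assumes sub: "subgroup G (sym_group N)" and rep: "is_representation G d \<rho>"
begin

abbreviation iv where "iv s \<equiv> inv\<^bsub>sym_group N\<^esub> s"

lemma subc: "G \<subseteq> carrier (sym_group N)"
  using sub subgroup.subset by blast

lemma finG: "finite G"
proof -
  have "finite {p. p permutes {1..N}}" by (rule finite_permutations) simp
  then show ?thesis using subc finite_subset unfolding sym_group_carrier by (auto simp: sym_group_def)
qed

lemma idG: "id \<in> G"
  using subgroup.one_closed[OF sub] by (simp add: sym_group_one)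

lemma compG: "s \<in> G \<Longrightarrow> t \<in> G \<Longrightarrow> s \<circ> t \<in> G"
  using subgroup.m_closed[OF sub] by (simp add: sym_group_mult)

lemma ivG: "s \<in> G \<Longrightarrow> iv s \<in> G"
  using subgroup.m_inv_closed[OF sub] by simp

lemma iv_r: "s \<in> G \<Longrightarrow> s \<circ> iv s = id"
  using group.r_inv[OF sym_group_is_group, of s N] subc by (auto simp: sym_group_mult sym_group_one)

lemma iv_l: "s \<in> G \<Longrightarrow> iv s \<circ> s = id"
  using group.l_inv[OF sym_group_is_group, of s N] subc by (auto simp: sym_group_mult sym_group_one)

lemma permG: "s \<in> G \<Longrightarrow> s permutes {1..N}"
  using subc sym_group_carrier by blast

lemma bij_right: assumes s: "s \<in> G" shows "bij_betw (\<lambda>g. g \<circ> s) G G"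
proof (rule bij_betwI[where g = "\<lambda>g. g \<circ> iv s"])
  show "(\<lambda>g. g \<circ> s) \<in> G \<rightarrow> G" using s compG by auto
  show "(\<lambda>g. g \<circ> iv s) \<in> G \<rightarrow> G" using s compG ivG by auto
  show "g \<circ> s \<circ> iv s = g" for g using iv_r[OF s] by (simp add: comp_assoc)
  show "g \<circ> iv s \<circ> s = g" for g using iv_l[OF s] by (simp add: comp_assoc)
qed

lemma rho_carrier: "s \<in> G \<Longrightarrow> \<rho> s \<in> carrier_mat d d"
  using rep unfolding is_representation_def by blast

lemma rho_id: "\<rho> id = 1\<^sub>m d"
  using rep unfolding is_representation_def by blast

lemma rho_mult: "s \<in> G \<Longrightarrow> t \<in> G \<Longrightarrow> \<rho> (s \<circ> t) = \<rho> s * \<rho> t"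
  using rep unfolding is_representation_def by blast

definition r where "r s = (\<lambda>i j. if i < d \<and> j < d then \<rho> s $$ (i,j) else 0)"

lemma clean_r: "clean d (r s)"
  unfolding clean_def r_def by auto

lemma r_mult: assumes "s \<in> G" "t \<in> G" shows "r (s \<circ> t) = mm d (r s) (r t)"
proof (intro ext)
  fix i j
  show "r (s \<circ> t) i j = mm d (r s) (r t) i j"
  proof (cases "i < d \<and> j < d")
    case True
    then have "r (s \<circ> t) i j = (\<rho> s * \<rho> t) $$ (i,j)" using rho_mult[OF assms] by (simp add: r_def)
    also have "\<dots> = (\<Sum>k<d. \<rho> s $$ (i,k) * \<rho> t $$ (k,j))"
      using True rho_carrier[OF assms(1)] rho_carrier[OF assms(2)]
      by (simp add: scalar_prod_def atLeast0LessThan)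
    also have "\<dots> = mm d (r s) (r t) i j"
      unfolding mm_def r_def using True by (intro sum.cong) auto
    finally show ?thesis .
  next
    case False
    then show ?thesis using clean_mm[OF clean_r clean_r, of s t] clean_r[of "s \<circ> t"]
      unfolding clean_def by metis
  qed
qed

lemma r_id: "r id = idm d"
  unfolding r_def idm_def rho_id by (intro ext) auto

lemma trace_r: "s \<in> G \<Longrightarrow> mat_trace (\<rho> s) = tr d (r s)"
  using rho_carrier[of s] unfolding mat_trace_def tr_def r_def by (intro sum.cong) auto

definition Hs where "Hs g = mm d (adj (r g)) (r g)"
definition H where "H = (\<lambda>i j. \<Sum>g\<in>G. Hs g i j)"

lemma clean_H: "clean d H"
  unfolding clean_def H_def Hs_def using clean_mm[OF clean_adj[OF clean_r] clean_r]
  unfolding clean_def by simp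

lemma adj_H: "adj H = H"
proof -
  have "adj (Hs g) = Hs g" for g unfolding Hs_def by (simp add: adj_mm)
  then show ?thesis unfolding H_def adj_def by (auto simp: cnj_sum intro!: ext) metis
qed

lemma H_inv: assumes s: "s \<in> G" shows "mm d (adj (r s)) (mm d H (r s)) = H"
proof -
  have "mm d (adj (r s)) (mm d H (r s)) = (\<lambda>i j. \<Sum>g\<in>G. mm d (adj (r s)) (mm d (Hs g) (r s)) i j)"
    unfolding H_def mm_sum_left mm_sum_right ..
  also have "\<dots> = (\<lambda>i j. \<Sum>g\<in>G. Hs (g \<circ> s) i j)"
  proof -
    have "mm d (adj (r s)) (mm d (Hs g) (r s)) = Hs (g \<circ> s)" if "g \<in> G" for g
      unfolding Hs_def r_mult[OF that s] adj_mm by (simp add: mm_assoc)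
    then show ?thesis by (auto intro!: ext sum.cong)
  qed
  also have "\<dots> = H"
    unfolding H_def
  proof (intro ext)
    fix i j
    show "(\<Sum>g\<in>G. Hs (g \<circ> s) i j) = (\<Sum>g\<in>G. Hs g i j)"
      using sum.reindex_bij_betw[OF bij_right[OF s], of "\<lambda>g. Hs g i j"] by simp
  qed
  finally show ?thesis .
qed

lemma H_quad:
  "(\<Sum>i<d. cnj (w i) * (\<Sum>j<d. H i j * w j))
    = (\<Sum>g\<in>G. \<Sum>k<d. cnj (\<Sum>i<d. r g k i * w i) * (\<Sum>j<d. r g k j * w j))"
proof -
  have "(\<Sum>i<d. cnj (w i) * (\<Sum>j<d. H i j * w j))
      = (\<Sum>i<d. \<Sum>j<d. \<Sum>g\<in>G. \<Sum>k<d. cnj (r g k i * w i) * (r g k j * w j))"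
    unfolding H_def Hs_def mm_def adj_def
    by (simp add: sum_distrib_left sum_distrib_right algebra_simps)
  also have "\<dots> = (\<Sum>g\<in>G. \<Sum>k<d. \<Sum>i<d. \<Sum>j<d. cnj (r g k i * w i) * (r g k j * w j))"
  proof -
    have "(\<Sum>i<d. \<Sum>j<d. \<Sum>g\<in>G. \<Sum>k<d. f i j g k) = (\<Sum>g\<in>G. \<Sum>k<d. \<Sum>i<d. \<Sum>j<d. f i j g k)"
      for f :: "nat \<Rightarrow> nat \<Rightarrow> (nat \<Rightarrow> nat) \<Rightarrow> nat \<Rightarrow> complex"
    proof -
      have "(\<Sum>i<d. \<Sum>j<d. \<Sum>g\<in>G. \<Sum>k<d. f i j g k) = (\<Sum>i<d. \<Sum>g\<in>G. \<Sum>j<d. \<Sum>k<d. f i j g k)"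
        by (rule sum.cong[OF refl], rule sum.swap)
      also have "\<dots> = (\<Sum>g\<in>G. \<Sum>i<d. \<Sum>j<d. \<Sum>k<d. f i j g k)" by (rule sum.swap)
      also have "\<dots> = (\<Sum>g\<in>G. \<Sum>i<d. \<Sum>k<d. \<Sum>j<d. f i j g k)"
        by (rule sum.cong[OF refl], rule sum.cong[OF refl], rule sum.swap)
      also have "\<dots> = (\<Sum>g\<in>G. \<Sum>k<d. \<Sum>i<d. \<Sum>j<d. f i j g k)"
        by (rule sum.cong[OF refl], rule sum.swap)
      finally show ?thesis .
    qed
    then show ?thesis .
  qed
  also have "\<dots> = (\<Sum>g\<in>G. \<Sum>k<d. cnj (\<Sum>i<d. r g k i * w i) * (\<Sum>j<d. r g k j * w j))"
    by (simp add: cnj_sum sum_distrib_left sum_distrib_right)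
      (rule sum.cong[OF refl], rule sum.cong[OF refl], rule sum.swap)
  finally show ?thesis .
qed

lemma H_posdef:
  assumes z: "\<forall>i<d. (\<Sum>j<d. H i j * w j) = 0" and k: "k < d"
  shows "w k = 0"
proof -
  define q where "q g k = cnj (\<Sum>i<d. r g k i * w i) * (\<Sum>j<d. r g k j * w j)" for g k
  have nn: "0 \<le> q g k" for g k unfolding q_def by (rule cnj_mult_self_nonneg)
  have "(\<Sum>g\<in>G. \<Sum>k<d. q g k) = 0"
    unfolding q_def H_quad[symmetric] using z by simp
  then have "\<forall>g\<in>G. (\<Sum>k<d. q g k) = 0"
    using sum_nonneg_eq_0_iff[OF finG, of "\<lambda>g. \<Sum>k<d. q g k"] nn by (simp add: sum_nonneg)
  then have "(\<Sum>k<d. q id k) = 0"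
    using idG by blast
  then have "\<forall>k\<in>{..<d}. q id k = 0"
    using sum_nonneg_eq_0_iff[of "{..<d}" "q id"] nn by simp
  then have "q id k = 0" using k by blast
  moreover have "(\<Sum>j<d. r id k j * w j) = w k"
  proof -
    have "(\<Sum>j<d. r id k j * w j) = (\<Sum>j<d. if j = k then w j else 0)"
      unfolding r_id idm_def using k by (intro sum.cong) auto
    then show ?thesis using k by (simp add: sum.delta)
  qed
  ultimately show ?thesis unfolding q_def by simp
qed

end



lemma swap_out: "(\<Sum>s\<in>A. \<Sum>t\<in>A. \<Sum>a\<in>B. f s t a) = (\<Sum>a\<in>B. \<Sum>s\<in>A. \<Sum>t\<in>A. f s t a)"
proof -
  have "(\<Sum>s\<in>A. \<Sum>t\<in>A. \<Sum>a\<in>B. f s t a) = (\<Sum>s\<in>A. \<Sum>a\<in>B. \<Sum>t\<in>A. f s t a)"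
    by (rule sum.cong[OF refl], rule sum.swap)
  also have "\<dots> = (\<Sum>a\<in>B. \<Sum>s\<in>A. \<Sum>t\<in>A. f s t a)" by (rule sum.swap)
  finally show ?thesis .
qed

lemma swap4: "(\<Sum>s\<in>A. \<Sum>t\<in>A. \<Sum>g\<in>B. \<Sum>h\<in>B. \<Sum>i\<in>C. \<Sum>k\<in>C. f s t g h i k)
  = (\<Sum>g\<in>B. \<Sum>h\<in>B. \<Sum>i\<in>C. \<Sum>k\<in>C. \<Sum>s\<in>A. \<Sum>t\<in>A. f s t g h i k)"
proof -
  have "(\<Sum>s\<in>A. \<Sum>t\<in>A. \<Sum>g\<in>B. \<Sum>h\<in>B. \<Sum>i\<in>C. \<Sum>k\<in>C. f s t g h i k)
    = (\<Sum>g\<in>B. \<Sum>s\<in>A. \<Sum>t\<in>A. \<Sum>h\<in>B. \<Sum>i\<in>C. \<Sum>k\<in>C. f s t g h i k)"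
    by (rule swap_out)
  also have "\<dots> = (\<Sum>g\<in>B. \<Sum>h\<in>B. \<Sum>s\<in>A. \<Sum>t\<in>A. \<Sum>i\<in>C. \<Sum>k\<in>C. f s t g h i k)"
    by (rule sum.cong[OF refl], rule swap_out)
  also have "\<dots> = (\<Sum>g\<in>B. \<Sum>h\<in>B. \<Sum>i\<in>C. \<Sum>s\<in>A. \<Sum>t\<in>A. \<Sum>k\<in>C. f s t g h i k)"
    by (rule sum.cong[OF refl], rule sum.cong[OF refl], rule swap_out)
  also have "\<dots> = (\<Sum>g\<in>B. \<Sum>h\<in>B. \<Sum>i\<in>C. \<Sum>k\<in>C. \<Sum>s\<in>A. \<Sum>t\<in>A. f s t g h i k)"
    by (rule sum.cong[OF refl], rule sum.cong[OF refl], rule sum.cong[OF refl], rule swap_out)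
  finally show ?thesis .
qed

context repctx begin

lemma Hi_ex: "\<exists>Hi. clean d Hi \<and> mm d H Hi = idm d"
proof -
  define Hm where "Hm = mat d d (\<lambda>(i,j). H i j)"
  have Hm: "Hm \<in> carrier_mat d d" by (simp add: Hm_def)
  have "det Hm \<noteq> 0"
  proof
    assume "det Hm = 0"
    then obtain v where v: "v \<in> carrier_vec d" "v \<noteq> 0\<^sub>v d" "Hm *\<^sub>v v = 0\<^sub>v d"
      using det_0_iff_vec_prod_zero[OF Hm] by blast
    define w where "w k = (if k < d then v $ k else 0)" for k
    have "\<forall>i<d. (\<Sum>j<d. H i j * w j) = 0"
    proof (intro allI impI)
      fix i assume i: "i < d"
      have "(Hm *\<^sub>v v) $ i = 0" using v(3) i by simp
      moreover have "(Hm *\<^sub>v v) $ i = (\<Sum>j<d. H i j * w j)"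
        using i v(1) by (auto simp: Hm_def scalar_prod_def w_def atLeast0LessThan intro!: sum.cong)
      ultimately show "(\<Sum>j<d. H i j * w j) = 0" by simp
    qed
    then have "\<forall>k<d. w k = 0" using H_posdef by blast
    then have "v = 0\<^sub>v d" using v(1) by (intro eq_vecI) (auto simp: w_def)
    with v(2) show False by simp
  qed
  from det_non_zero_imp_unit[OF Hm this, of undefined] obtain B where B: "B \<in> carrier_mat d d" "Hm * B = 1\<^sub>m d"
    unfolding Units_def ring_mat_simps by auto
  define Hi where "Hi = (\<lambda>i j. if i < d \<and> j < d then B $$ (i,j) else 0)"
  have cHi: "clean d Hi" unfolding Hi_def clean_def by auto
  have "mm d H Hi = idm d"
  proof (intro ext)
    fix i j
    show "mm d H Hi i j = idm d i j"
    proof (cases "i < d \<and> j < d")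
      case True
      have "mm d H Hi i j = (Hm * B) $$ (i,j)" using True B(1)
        by (auto simp: mm_def Hi_def Hm_def scalar_prod_def atLeast0LessThan intro!: sum.cong)
      then show ?thesis using B(2) True by (simp add: idm_def)
    next
      case False then show ?thesis using clean_mm[OF clean_H cHi] clean_idm unfolding clean_def by metis
    qed
  qed
  with cHi show ?thesis by blast
qed

lemma PL: "0 \<le> (\<Sum>s\<in>G. \<Sum>t\<in>G. tr d (r (t \<circ> iv s)) * (cnj (u s) * u t))"
proof -
  obtain Hi where Hi: "clean d Hi" "mm d H Hi = idm d" using Hi_ex by blast
  have aHi: "mm d (adj Hi) H = idm d"
    using arg_cong[of _ _ adj, OF Hi(2)] by (simp add: adj_mm adj_H adj_idm)
  have cadjHi: "clean d (adj Hi)" using Hi(1) by (rule clean_adj)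
  have herm: "adj Hi = Hi"
  proof -
    have "adj Hi = mm d (adj Hi) (mm d H Hi)" using Hi(2) mm_idm_right[OF cadjHi] by simp
    also have "\<dots> = mm d (mm d (adj Hi) H) Hi" by (simp add: mm_assoc)
    also have "\<dots> = Hi" using aHi mm_idm_left[OF Hi(1)] by simp
    finally show ?thesis .
  qed
  have Hi_eq: "mm d (mm d (adj Hi) H) Hi = Hi" using aHi mm_idm_left[OF Hi(1)] by simp
  have rs': "r (iv s) = mm d (mm d (mm d (mm d (adj Hi) H) Hi) (adj (r s))) H" if s: "s \<in> G" for s
  proof -
    have c1: "clean d (mm d (adj (r s)) H)" by (intro clean_mm clean_adj clean_r clean_H)
    have "mm d (adj (r s)) H = mm d (mm d (adj (r s)) H) (idm d)" using mm_idm_right[OF c1] by simp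
    also have "\<dots> = mm d (mm d (adj (r s)) H) (mm d (r s) (r (iv s)))"
      using r_mult[OF s ivG[OF s]] iv_r[OF s] r_id by simp
    also have "\<dots> = mm d (mm d (adj (r s)) (mm d H (r s))) (r (iv s))" by (simp add: mm_assoc)
    also have "\<dots> = mm d H (r (iv s))" using H_inv[OF s] by simp
    finally have e: "mm d (adj (r s)) H = mm d H (r (iv s))" .
    have "r (iv s) = mm d (mm d (adj Hi) H) (r (iv s))" using aHi mm_idm_left[OF clean_r] by simp
    also have "\<dots> = mm d (adj Hi) (mm d (adj (r s)) H)" using e by (simp add: mm_assoc)
    also have "\<dots> = mm d Hi (mm d (adj (r s)) H)" using herm by simp
    also have "\<dots> = mm d (mm d (mm d (mm d (adj Hi) H) Hi) (adj (r s))) H"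
      by (subst Hi_eq) (simp add: mm_assoc)
    finally show ?thesis .
  qed
  define Z where "Z g h x = mm d (mm d (mm d (r g) (r x)) (adj Hi)) (adj (r h))" for g h x
  have tr_id: "tr d (r (t \<circ> iv s)) = (\<Sum>g\<in>G. \<Sum>h\<in>G. tr d (mm d (Z g h t) (adj (Z g h s))))"
    if s: "s \<in> G" and t: "t \<in> G" for s t
  proof -
    define A where "A = mm d (r t) (mm d (adj Hi) (mm d H (mm d Hi (adj (r s)))))"
    have "tr d (r (t \<circ> iv s)) = tr d (mm d A H)"
      unfolding r_mult[OF t ivG[OF s]] rs'[OF s] A_def by (simp add: mm_assoc)
    also have "\<dots> = (\<Sum>g\<in>G. tr d (mm d A (Hs g)))"
      unfolding H_def mm_sum_right tr_sum ..
    also have "\<dots> = (\<Sum>g\<in>G. tr d (mm d (r g) (mm d A (adj (r g)))))"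
    proof (rule sum.cong[OF refl])
      fix g
      have "tr d (mm d A (Hs g)) = tr d (mm d (mm d A (adj (r g))) (r g))"
        unfolding Hs_def by (simp add: mm_assoc)
      also have "\<dots> = tr d (mm d (r g) (mm d A (adj (r g))))" by (rule tr_comm)
      finally show "tr d (mm d A (Hs g)) = tr d (mm d (r g) (mm d A (adj (r g))))" .
    qed
    also have "\<dots> = (\<Sum>g\<in>G. \<Sum>h\<in>G. tr d (mm d (Z g h t) (adj (Z g h s))))"
    proof (rule sum.cong[OF refl])
      fix g
      have "mm d (r g) (mm d A (adj (r g)))
        = mm d (mm d (r g) (mm d (r t) (adj Hi))) (mm d H (mm d Hi (mm d (adj (r s)) (adj (r g)))))"
        unfolding A_def by (simp add: mm_assoc)
      also have "\<dots> = (\<lambda>i j. \<Sum>h\<in>G. mm d (mm d (r g) (mm d (r t) (adj Hi))) (mm d (Hs h) (mm d Hi (mm d (adj (r s)) (adj (r g))))) i j)"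
        unfolding H_def mm_sum_left mm_sum_right ..
      finally have "tr d (mm d (r g) (mm d A (adj (r g))))
         = (\<Sum>h\<in>G. tr d (mm d (mm d (r g) (mm d (r t) (adj Hi))) (mm d (Hs h) (mm d Hi (mm d (adj (r s)) (adj (r g)))))))"
        by (simp add: tr_sum)
      also have "\<dots> = (\<Sum>h\<in>G. tr d (mm d (Z g h t) (adj (Z g h s))))"
        unfolding Z_def Hs_def by (simp add: adj_mm mm_assoc)
      finally show "tr d (mm d (r g) (mm d A (adj (r g)))) = (\<Sum>h\<in>G. tr d (mm d (Z g h t) (adj (Z g h s))))" .
    qed
    finally show ?thesis .
  qed
  have "(\<Sum>s\<in>G. \<Sum>t\<in>G. tr d (r (t \<circ> iv s)) * (cnj (u s) * u t))
     = (\<Sum>s\<in>G. \<Sum>t\<in>G. \<Sum>g\<in>G. \<Sum>h\<in>G. \<Sum>i\<in>{..<d}. \<Sum>k\<in>{..<d}.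
          cnj (u s * Z g h s i k) * (u t * Z g h t i k))"
  proof (intro sum.cong refl)
    fix s t assume st: "s \<in> G" "t \<in> G"
    show "tr d (r (t \<circ> iv s)) * (cnj (u s) * u t) = (\<Sum>g\<in>G. \<Sum>h\<in>G. \<Sum>i\<in>{..<d}. \<Sum>k\<in>{..<d}.
          cnj (u s * Z g h s i k) * (u t * Z g h t i k))"
      by (subst tr_id[OF st]) (simp add: tr_def mm_def adj_def sum_distrib_right sum_distrib_left algebra_simps)
  qed
  also have "\<dots> = (\<Sum>g\<in>G. \<Sum>h\<in>G. \<Sum>i\<in>{..<d}. \<Sum>k\<in>{..<d}. \<Sum>s\<in>G. \<Sum>t\<in>G.
          cnj (u s * Z g h s i k) * (u t * Z g h t i k))"
    by (rule swap4)
  also have "\<dots> = (\<Sum>g\<in>G. \<Sum>h\<in>G. \<Sum>i\<in>{..<d}. \<Sum>k\<in>{..<d}.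
          cnj (\<Sum>s\<in>G. u s * Z g h s i k) * (\<Sum>t\<in>G. u t * Z g h t i k))"
    by (simp add: cnj_sum sum_distrib_left sum_distrib_right)
      (rule sum.cong[OF refl], rule sum.cong[OF refl], rule sum.cong[OF refl], rule sum.cong[OF refl], rule sum.swap)
  also have "0 \<le> \<dots>"
    by (intro sum_nonneg cnj_mult_self_nonneg)
  finally show ?thesis .
qed

end



lemma of_real_gram_list:
  "(\<Sum>u\<leftarrow>us. cnj (complex_of_real (u a)) * complex_of_real (u b)) = complex_of_real (\<Sum>u\<leftarrow>us. u a * u b)"
  by (induction us) simp_all

lemma gram_base:
  assumes psd: "real_sym_psd N Y" and perm: "\<forall>s\<in>S. s permutes {1..N}" and i: "i \<in> {1..N}"
  shows "gram S (\<lambda>s t. complex_of_real (Y (s i) (t i)))"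
proof -
  have fin: "finite {1..N}" by simp
  have sym: "\<forall>i\<in>{1..N}. \<forall>j\<in>{1..N}. Y i j = Y j i" and pos: "\<forall>x. 0 \<le> (\<Sum>i=1..N. \<Sum>j=1..N. x i * Y i j * x j)"
    using psd unfolding real_sym_psd_def by blast+
  obtain us where us: "\<forall>i\<in>{1..N}. \<forall>j\<in>{1..N}. Y i j = (\<Sum>u\<leftarrow>us. u i * u j)"
    using psd_factor[OF fin, THEN spec[of _ Y], THEN mp, OF sym, THEN mp, OF pos] by blast
  have si: "s i \<in> {1..N}" if "s \<in> S" for s
  proof -
    have "s permutes {1..N}" using perm that by blast
    then show ?thesis using permutes_in_image i by metis
  qed
  show ?thesis unfolding gram_def
  proof (rule exI[of _ "map (\<lambda>u s. complex_of_real (u (s i))) us"], intro ballI)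
    fix s t assume "s \<in> S" "t \<in> S"
    then have "Y (s i) (t i) = (\<Sum>u\<leftarrow>us. u (s i) * u (t i))" using us si by blast
    moreover have "(\<Sum>u\<leftarrow>map (\<lambda>u s. complex_of_real (u (s i))) us. cnj (u s) * u t)
       = (\<Sum>u\<leftarrow>us. cnj (complex_of_real (u (s i))) * complex_of_real (u (t i)))"
      by (simp only: map_map o_def)
    ultimately show "complex_of_real (Y (s i) (t i)) = (\<Sum>u\<leftarrow>map (\<lambda>u s. complex_of_real (u (s i))) us. cnj (u s) * u t)"
      by (simp only: of_real_gram_list)
  qed
qed

lemma cplx_scale: assumes "0 < n" "0 \<le> of_nat n * (z::complex)" shows "0 \<le> z"
  using assms by (auto simp: less_eq_complex_def zero_le_mult_iff)

context repctx begin

definition Q where "Q K = (\<Sum>s\<in>G. \<Sum>t\<in>G. tr d (r (t \<circ> iv s)) * K s t)"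

lemma Q_gram: assumes "gram G K" shows "0 \<le> Q K"
proof -
  obtain us where us: "\<forall>s\<in>G. \<forall>t\<in>G. K s t = (\<Sum>u\<leftarrow>us. cnj (u s) * u t)"
    using assms unfolding gram_def by blast
  have "Q K = Q (\<lambda>s t. \<Sum>u\<leftarrow>us. cnj (u s) * u t)"
    unfolding Q_def using us by (intro sum.cong refl) auto
  also have "\<dots> = (\<Sum>u\<leftarrow>us. Q (\<lambda>s t. cnj (u s) * u t))"
    unfolding Q_def by (induction us) (simp_all add: distrib_left sum.distrib)
  also have "0 \<le> \<dots>"
    by (rule sum_list_nonneg) (auto simp: Q_def intro: PL)
  finally show ?thesis .
qed

lemma Q_P: "Q (\<lambda>s t. \<Prod>i\<in>{1..N}. complex_of_real (Y (s i) (t i)))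
   = of_nat (card G) * (\<Sum>p\<in>G. tr d (r p) * (\<Prod>i\<in>{1..N}. complex_of_real (Y i (p i))))"
proof -
  have inner: "(\<Sum>t\<in>G. tr d (r (t \<circ> iv s)) * (\<Prod>i\<in>{1..N}. complex_of_real (Y (s i) (t i))))
     = (\<Sum>p\<in>G. tr d (r p) * (\<Prod>i\<in>{1..N}. complex_of_real (Y i (p i))))" if s: "s \<in> G" for s
  proof -
    have pr: "(\<Prod>i\<in>{1..N}. complex_of_real (Y (s i) (t i))) = (\<Prod>j\<in>{1..N}. complex_of_real (Y j ((t \<circ> iv s) j)))" for t
    proof -
      have "(\<Prod>j\<in>{1..N}. complex_of_real (Y j ((t \<circ> iv s) j))) = (\<Prod>i\<in>{1..N}. complex_of_real (Y (s i) ((t \<circ> iv s) (s i))))"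
        using prod.reindex_bij_betw[OF permutes_imp_bij[OF permG[OF s]], of "\<lambda>j. complex_of_real (Y j ((t \<circ> iv s) j))"]
        by simp
      also have "\<dots> = (\<Prod>i\<in>{1..N}. complex_of_real (Y (s i) (t i)))"
      proof -
        have "iv s (s i) = i" for i using iv_l[OF s] by (metis comp_apply id_apply)
        then show ?thesis by simp
      qed
      finally show ?thesis by simp
    qed
    have "(\<Sum>t\<in>G. tr d (r (t \<circ> iv s)) * (\<Prod>i\<in>{1..N}. complex_of_real (Y (s i) (t i))))
       = (\<Sum>t\<in>G. tr d (r (t \<circ> iv s)) * (\<Prod>j\<in>{1..N}. complex_of_real (Y j ((t \<circ> iv s) j))))"
      unfolding pr ..
    also have "\<dots> = (\<Sum>p\<in>G. tr d (r p) * (\<Prod>i\<in>{1..N}. complex_of_real (Y i (p i))))"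
      using sum.reindex_bij_betw[OF bij_right[OF ivG[OF s]], of "\<lambda>p. tr d (r p) * (\<Prod>i\<in>{1..N}. complex_of_real (Y i (p i)))"]
      by simp
    finally show ?thesis .
  qed
  show ?thesis unfolding Q_def using inner by simp
qed

end

theorem theorem5p7:
  fixes N :: nat and G :: "(nat \<Rightarrow> nat) set" and \<chi> :: "(nat \<Rightarrow> nat) \<Rightarrow> complex"
    and A B C X :: "nat \<Rightarrow> nat \<Rightarrow> real"
  assumes "subgroup G (sym_group N)"
    and "irreducible_character G \<chi>"
    and "real_sym_psd N A" and "real_sym_psd N B" and "real_sym_psd N C" and "real_sym_psd N X"
  shows "immanant G \<chi> N (\<lambda>i j. A i j + X i j) + immanant G \<chi> N (\<lambda>i j. B i j + X i j)
         + immanant G \<chi> N (\<lambda>i j. C i j + X i j) + immanant G \<chi> N (\<lambda>i j. A i j + B i j + C i j + X i j)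
       \<ge> immanant G \<chi> N (\<lambda>i j. A i j + B i j + X i j) + immanant G \<chi> N (\<lambda>i j. B i j + C i j + X i j)
         + immanant G \<chi> N (\<lambda>i j. C i j + A i j + X i j) + immanant G \<chi> N X"
proof -
  obtain d \<rho> where ir: "irreducible_representation G d \<rho>" and ch: "\<forall>\<sigma>\<in>G. \<chi> \<sigma> = mat_trace (\<rho> \<sigma>)"
    using assms(2) unfolding irreducible_character_def by blast
  interpret repctx G N d \<rho>
    using assms(1) ir unfolding repctx_def irreducible_representation_def by blast
  define P where "P Y = (\<lambda>s t. \<Prod>i\<in>{1..N}. complex_of_real (Y (s i) (t i)))" for Y :: "nat \<Rightarrow> nat \<Rightarrow> real"
  have QP: "Q (P Y) = of_nat (card G) * immanant G \<chi> N Y" for Y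
  proof -
    have "immanant G \<chi> N Y = (\<Sum>p\<in>G. tr d (r p) * (\<Prod>i\<in>{1..N}. complex_of_real (Y i (p i))))"
      unfolding immanant_def using ch trace_r by (intro sum.cong) auto
    then show ?thesis unfolding P_def Q_P by simp
  qed
  define D where "D s t = P (\<lambda>i j. A i j + X i j) s t + P (\<lambda>i j. B i j + X i j) s t
      + P (\<lambda>i j. C i j + X i j) s t + P (\<lambda>i j. A i j + B i j + C i j + X i j) s t
      - P (\<lambda>i j. A i j + B i j + X i j) s t - P (\<lambda>i j. B i j + C i j + X i j) s t
      - P (\<lambda>i j. C i j + A i j + X i j) s t - P X s t" for s t
  have QD: "Q D = of_nat (card G) * (immanant G \<chi> N (\<lambda>i j. A i j + X i j) + immanant G \<chi> N (\<lambda>i j. B i j + X i j)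
         + immanant G \<chi> N (\<lambda>i j. C i j + X i j) + immanant G \<chi> N (\<lambda>i j. A i j + B i j + C i j + X i j)
       - (immanant G \<chi> N (\<lambda>i j. A i j + B i j + X i j) + immanant G \<chi> N (\<lambda>i j. B i j + C i j + X i j)
         + immanant G \<chi> N (\<lambda>i j. C i j + A i j + X i j) + immanant G \<chi> N X))"
  proof -
    have "Q D = Q (P (\<lambda>i j. A i j + X i j)) + Q (P (\<lambda>i j. B i j + X i j))
      + Q (P (\<lambda>i j. C i j + X i j)) + Q (P (\<lambda>i j. A i j + B i j + C i j + X i j))
      - Q (P (\<lambda>i j. A i j + B i j + X i j)) - Q (P (\<lambda>i j. B i j + C i j + X i j))
      - Q (P (\<lambda>i j. C i j + A i j + X i j)) - Q (P X)"
      unfolding Q_def D_def by (simp add: sum.distrib sum_subtractf algebra_simps)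
    then show ?thesis unfolding QP by (simp add: algebra_simps)
  qed
  have perm: "\<forall>s\<in>G. s permutes {1..N}" using permG by blast
  have gD: "gram G D"
  proof -
    let ?a = "\<lambda>i s t. complex_of_real (A (s i) (t i))"
    let ?b = "\<lambda>i s t. complex_of_real (B (s i) (t i))"
    let ?c = "\<lambda>i s t. complex_of_real (C (s i) (t i))"
    let ?x = "\<lambda>i s t. complex_of_real (X (s i) (t i))"
    have g: "gram G (\<lambda>s t. \<Sum>T\<in>Pow {1..N} - {{}}. (\<Prod>i\<in>T. ?c i s t) *
     (\<Sum>U\<in>Pow ({1..N} - T) - {{}}. (\<Prod>i\<in>U. ?b i s t) *
     (\<Sum>V\<in>Pow ({1..N} - T - U) - {{}}. (\<Prod>i\<in>V. ?a i s t) * (\<Prod>i\<in>{1..N} - T - U - V. ?x i s t))))"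
      by (rule gram_nested) (auto intro!: gram_base[OF _ perm] assms)
    show ?thesis
    proof (rule gram_cong[OF g])
      fix s t
      show "(\<Sum>T\<in>Pow {1..N} - {{}}. (\<Prod>i\<in>T. ?c i s t) *
       (\<Sum>U\<in>Pow ({1..N} - T) - {{}}. (\<Prod>i\<in>U. ?b i s t) *
       (\<Sum>V\<in>Pow ({1..N} - T - U) - {{}}. (\<Prod>i\<in>V. ?a i s t) * (\<Prod>i\<in>{1..N} - T - U - V. ?x i s t)))) = D s t"
        unfolding scalar3[OF finite_atLeastAtMost] D_def P_def by simp
    qed
  qed
  have "0 \<le> Q D" using Q_gram[OF gD] .
  then have "0 \<le> of_nat (card G) * (immanant G \<chi> N (\<lambda>i j. A i j + X i j) + immanant G \<chi> N (\<lambda>i j. B i j + X i j)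
         + immanant G \<chi> N (\<lambda>i j. C i j + X i j) + immanant G \<chi> N (\<lambda>i j. A i j + B i j + C i j + X i j)
       - (immanant G \<chi> N (\<lambda>i j. A i j + B i j + X i j) + immanant G \<chi> N (\<lambda>i j. B i j + C i j + X i j)
         + immanant G \<chi> N (\<lambda>i j. C i j + A i j + X i j) + immanant G \<chi> N X))" (is "0 \<le> of_nat ?n * ?z")
    unfolding QD .
  moreover have "0 < ?n" using finG idG card_gt_0_iff by blast
  ultimately have "0 \<le> ?z"
    by (rule cplx_scale[rotated])
  then show ?thesis by (simp only: diff_ge_0_iff_ge)
qed


end
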